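(* Let $n\ge 2$ and assume a weighing matrix of order $n$ and weight $n-1$ exists. Let $q$ be a prime power with $q\ge n$. Then there exists a set of $q-1$ mutually unbiased weighing matrices of order $nq$ and weight $(n-1)^2$.
   Context: A weighing matrix of order $n$ and weight $k$ is an $n\times n$ matrix $W$ with entries in $\{1,-1,0\}$ such that $WW^T=kI_n$. Two weighing matrices $W_1,W_2$ of order $N$ and weight $K$ are unbiased if $\frac{1}{\sqrt{K}}W_1W_2^T$ is a weighing matrix of order $N$ and weight $K$; a set is mutually unbiased if any two distinct members are unbiased. *)

theory Defs
  imports "Jordan_Normal_Form.Matrix" "HOL-Number_Theory.Prime_Powers"
begin

definition weighing_matrix :: "nat \<Rightarrow> nat \<Rightarrow> int mat \<Rightarrow> bool" where
  "weighing_matrix n k W \<longleftrightarrow>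
     W \<in> carrier_mat n n \<and>
     (\<forall>i<n. \<forall>j<n. W $$ (i, j) \<in> {1, -1, 0}) \<and>
     W * W\<^sup>T = of_nat k \<cdot>\<^sub>m 1\<^sub>m n"

definition unbiased :: "nat \<Rightarrow> nat \<Rightarrow> int mat \<Rightarrow> int mat \<Rightarrow> bool" where
  "unbiased N K W1 W2 \<longleftrightarrow>
     (\<exists>W. weighing_matrix N K W \<and>
          (1 / sqrt (real K)) \<cdot>\<^sub>m map_mat real_of_int (W1 * W2\<^sup>T) = map_mat real_of_int W)"

definition mutually_unbiased_weighing :: "nat \<Rightarrow> nat \<Rightarrow> int mat set \<Rightarrow> bool" where
  "mutually_unbiased_weighing N K S \<longleftrightarrow>
     (\<forall>W\<in>S. weighing_matrix N K W) \<and>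
     (\<forall>W1\<in>S. \<forall>W2\<in>S. W1 \<noteq> W2 \<longrightarrow> unbiased N K W1 W2)"

end

theory Submission
  imports Defs "Jordan_Normal_Form.Determinant" "HOL-Algebra.Algebraic_Closure" "HOL-Number_Theory.Residues"
begin


lemma (in cring) binomial_alg:
  assumes x: "x \<in> carrier R" and y: "y \<in> carrier R"
  shows "(x \<oplus> y) [^] (n::nat) = (\<Oplus>k\<in>{..n}. [(n choose k)] \<cdot> (x [^] k \<otimes> y [^] (n - k)))"
proof (induction n)
  case 0
  then show ?case using x y by simp
next
  case (Suc n)
  define t where "t = (\<lambda>k. x [^] k \<otimes> y [^] (Suc n - k))"
  have tc: "t k \<in> carrier R" for k using x y by (simp add: t_def)
  have A: "x \<otimes> ([(n choose k)] \<cdot> (x [^] k \<otimes> y [^] (n - k))) = [(n choose k)] \<cdot> t (Suc k)" if "k \<le> n" for k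
  proof -
    have "x \<otimes> ([(n choose k)] \<cdot> (x [^] k \<otimes> y [^] (n - k))) = [(n choose k)] \<cdot> (x \<otimes> (x [^] k \<otimes> y [^] (n - k)))"
      using x y by (simp add: add_pow_rdistr)
    also have "x \<otimes> (x [^] k \<otimes> y [^] (n - k)) = t (Suc k)"
      using x y that by (simp add: t_def nat_pow_Suc2 m_assoc m_lcomm)
    finally show ?thesis .
  qed
  have B: "y \<otimes> ([(n choose k)] \<cdot> (x [^] k \<otimes> y [^] (n - k))) = [(n choose k)] \<cdot> t k" if "k \<le> n" for k
  proof -
    have "y \<otimes> ([(n choose k)] \<cdot> (x [^] k \<otimes> y [^] (n - k))) = [(n choose k)] \<cdot> (y \<otimes> (x [^] k \<otimes> y [^] (n - k)))"
      using x y by (simp add: add_pow_rdistr)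
    also have "y \<otimes> (x [^] k \<otimes> y [^] (n - k)) = t k"
    proof -
      have "Suc n - k = Suc (n - k)" using that by simp
      then show ?thesis using x y by (simp add: t_def m_ac)
    qed
    finally show ?thesis .
  qed
  have "(x \<oplus> y) [^] Suc n = (x \<oplus> y) \<otimes> (x \<oplus> y) [^] n"
    using x y by (simp add: m_comm)
  also have "\<dots> = x \<otimes> (\<Oplus>k\<in>{..n}. [(n choose k)] \<cdot> (x [^] k \<otimes> y [^] (n - k)))
               \<oplus> y \<otimes> (\<Oplus>k\<in>{..n}. [(n choose k)] \<cdot> (x [^] k \<otimes> y [^] (n - k)))"
    using x y Suc by (simp add: l_distr)
  also have "\<dots> = (\<Oplus>k\<in>{..n}. [(n choose k)] \<cdot> t (Suc k)) \<oplus> (\<Oplus>k\<in>{..n}. [(n choose k)] \<cdot> t k)"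
    using x y A B tc by (simp add: finsum_rdistr cong: finsum_cong)
  also have "(\<Oplus>k\<in>{..n}. [(n choose k)] \<cdot> t k) = (\<Oplus>k\<in>{..Suc n}. [(n choose k)] \<cdot> t k)"
    using tc by (simp add: finsum_Suc binomial_eq_0)
  also have "\<dots> = (\<Oplus>k\<in>{..n}. [(n choose Suc k)] \<cdot> t (Suc k)) \<oplus> [(n choose 0)] \<cdot> t 0"
    using tc by (intro finsum_Suc2) auto
  also have "(\<Oplus>k\<in>{..n}. [(n choose k)] \<cdot> t (Suc k)) \<oplus> ((\<Oplus>k\<in>{..n}. [(n choose Suc k)] \<cdot> t (Suc k)) \<oplus> [(n choose 0)] \<cdot> t 0)
      = (\<Oplus>k\<in>{..n}. [(Suc n choose Suc k)] \<cdot> t (Suc k)) \<oplus> [(Suc n choose 0)] \<cdot> t 0"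
    using tc by (simp add: a_assoc[symmetric] finsum_addf[symmetric] add.nat_pow_mult)
  also have "\<dots> = (\<Oplus>k\<in>{..Suc n}. [(Suc n choose k)] \<cdot> t k)"
    using tc by (intro finsum_Suc2[symmetric]) auto
  finally show ?case by (simp add: t_def)
qed

lemma (in cring) char_zero_mult:
  assumes "[(p::nat)] \<cdot> \<one> = \<zero>" "z \<in> carrier R"
  shows "[(p * c)] \<cdot> z = \<zero>"
proof -
  have "[p] \<cdot> z = \<zero>"
  proof -
    have "([p] \<cdot> \<one>) \<otimes> z = [p] \<cdot> (\<one> \<otimes> z)" using assms by (intro add_pow_ldistr) auto
    then show ?thesis using assms by simp
  qed
  then have "[c] \<cdot> ([p] \<cdot> z) = \<zero>" by simp
  then show ?thesis using assms by (simp add: add.nat_pow_pow)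
qed

lemma (in cring) frobenius:
  assumes p: "normalization_semidom_class.prime (p::nat)" and ch: "[p] \<cdot> \<one> = \<zero>"
    and x: "x \<in> carrier R" and y: "y \<in> carrier R"
  shows "(x \<oplus> y) [^] p = x [^] p \<oplus> y [^] p"
proof -
  define f where "f = (\<lambda>k. [(p choose k)] \<cdot> (x [^] k \<otimes> y [^] (p - k)))"
  have fc: "f k \<in> carrier R" for k using x y by (simp add: f_def)
  have mid: "f k = \<zero>" if "0 < k" "k < p" for k
  proof -
    have "p dvd (p choose k)" using dvd_choose_prime[of k p] p that by auto
    then obtain c where "p choose k = p * c" by auto
    then show ?thesis using char_zero_mult[OF ch, of "x [^] k \<otimes> y [^] (p - k)" c] x y
      by (simp add: f_def)
  qed
  obtain r where r: "p = Suc (Suc r)" using prime_gt_1_nat[OF p]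
    by (metis Suc_diff_Suc less_imp_Suc_add plus_1_eq_Suc)
  have "(x \<oplus> y) [^] p = (\<Oplus>k\<in>{..p}. f k)"
    unfolding f_def using binomial_alg[OF x y] by simp
  also have "\<dots> = f p \<oplus> (\<Oplus>k\<in>{..Suc r}. f k)"
    using fc r by (simp add: finsum_Suc)
  also have "(\<Oplus>k\<in>{..Suc r}. f k) = (\<Oplus>k\<in>{..r}. f (Suc k)) \<oplus> f 0"
    using fc by (intro finsum_Suc2) auto
  also have "(\<Oplus>k\<in>{..r}. f (Suc k)) = (\<Oplus>k\<in>{..r}. \<zero>)"
    using mid r by (intro finsum_cong) (auto simp: fc)
  also have "f 0 = y [^] p" using y by (simp add: f_def)
  also have "f p = x [^] p" using x by (simp add: f_def)
  finally show ?thesis using x y by (simp add: a_comm)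
qed

lemma (in cring) frobenius_pow:
  assumes p: "normalization_semidom_class.prime (p::nat)" and ch: "[p] \<cdot> \<one> = \<zero>"
    and x: "x \<in> carrier R" and y: "y \<in> carrier R"
  shows "(x \<oplus> y) [^] (p ^ m) = x [^] (p ^ m) \<oplus> y [^] (p ^ m)"
proof (induction m)
  case 0 then show ?case using x y by simp
next
  case (Suc m)
  have "(x \<oplus> y) [^] (p ^ Suc m) = ((x \<oplus> y) [^] (p ^ m)) [^] p"
    using x y by (simp add: nat_pow_pow mult.commute)
  also have "\<dots> = (x [^] (p ^ m)) [^] p \<oplus> (y [^] (p ^ m)) [^] p"
    using Suc frobenius[OF p ch] x y by simp
  also have "\<dots> = x [^] (p ^ Suc m) \<oplus> y [^] (p ^ Suc m)"
    using x y by (simp add: nat_pow_pow mult.commute)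
  finally show ?case .
qed


primrec geo :: "('a, 'b) ring_scheme \<Rightarrow> 'a \<Rightarrow> 'a \<Rightarrow> nat \<Rightarrow> 'a" where
  "geo R x y 0 = \<zero>\<^bsub>R\<^esub>"
| "geo R x y (Suc n) = x [^]\<^bsub>R\<^esub> n \<oplus>\<^bsub>R\<^esub> y \<otimes>\<^bsub>R\<^esub> geo R x y n"

lemma (in ring) geo_closed:
  "x \<in> carrier R \<Longrightarrow> y \<in> carrier R \<Longrightarrow> geo R x y n \<in> carrier R"
  by (induction n) auto

lemma (in cring) geo_telescope:
  assumes x: "x \<in> carrier R" and y: "y \<in> carrier R"
  shows "(x \<ominus> y) \<otimes> geo R x y n = x [^] n \<ominus> y [^] n"
proof (induction n)
  case 0 then show ?case using x y by (simp add: a_minus_def r_neg)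
next
  case (Suc n)
  have g: "geo R x y n \<in> carrier R" using geo_closed x y .
  have "(x \<ominus> y) \<otimes> geo R x y (Suc n) = (x \<ominus> y) \<otimes> x [^] n \<oplus> y \<otimes> ((x \<ominus> y) \<otimes> geo R x y n)"
    using x y g by (metis geo.simps(2) r_distr m_lcomm minus_closed nat_pow_closed m_closed)
  also have "\<dots> = (x \<ominus> y) \<otimes> x [^] n \<oplus> y \<otimes> (x [^] n \<ominus> y [^] n)" using Suc by simp
  also have "\<dots> = x [^] Suc n \<ominus> y [^] Suc n"
  proof -
    have xn: "x [^] n \<in> carrier R" and yn: "y [^] n \<in> carrier R" using x y by auto
    show ?thesis using x y xn yn unfolding nat_pow_Suc by algebra
  qed
  finally show ?case .
qed

lemma (in ring_hom_ring) hom_geo: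
  assumes "x \<in> carrier R" "y \<in> carrier R"
  shows "h (geo R x y n) = geo S (h x) (h y) n"
  using assms by (induction n) (auto simp: hom_nat_pow R.geo_closed)

lemma (in cring) geo_same:
  assumes a: "a \<in> carrier R"
  shows "geo R a a (Suc n) = [Suc n] \<cdot> (a [^] n)"
proof (induction n)
  case 0 then show ?case using a by simp
next
  case (Suc n)
  have "geo R a a (Suc (Suc n)) = a [^] Suc n \<oplus> a \<otimes> ([Suc n] \<cdot> (a [^] n))"
    using Suc by simp
  also have "a \<otimes> ([Suc n] \<cdot> (a [^] n)) = [Suc n] \<cdot> (a [^] Suc n)"
  proof -
    have e1: "a \<otimes> ([Suc n] \<cdot> (a [^] n)) = [Suc n] \<cdot> (a \<otimes> a [^] n)"
      by (rule add_pow_rdistr) (use a in auto)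
    have e2: "a \<otimes> a [^] n = a [^] Suc n" using a by (simp add: m_comm)
    show ?thesis unfolding e1 e2 by (rule refl)
  qed
  also have "a [^] Suc n \<oplus> [Suc n] \<cdot> (a [^] Suc n) = [Suc (Suc n)] \<cdot> (a [^] Suc n)"
    using a by (metis add.nat_pow_Suc2 nat_pow_closed)
  finally show ?case .
qed

lemma (in domain) lin_eq:
  assumes a: "a \<in> carrier R"
  shows "X \<ominus>\<^bsub>poly_ring R\<^esub> poly_of_const a = [\<one>, \<ominus> a]"
proof -
  have pc: "poly_of_const a \<in> carrier (poly_ring R)"
    using a by (auto simp: poly_of_const_def univ_poly_carrier[symmetric] polynomial_def)
  have "\<ominus>\<^bsub>poly_ring R\<^esub> poly_of_const a = map (\<lambda>b. \<ominus> b) (poly_of_const a)"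
    using univ_poly_a_inv_def'[OF carrier_is_subring pc] .
  then show ?thesis
    using a by (auto simp: a_minus_def var_def poly_of_const_def univ_poly_add)
qed


lemma (in ring) minus_cancel_aux:
  "A \<in> carrier R \<Longrightarrow> B \<in> carrier R \<Longrightarrow> c \<in> carrier R \<Longrightarrow> (A \<ominus> c) \<ominus> (B \<ominus> c) = A \<ominus> B"
  by algebra

lemma (in ring) mult_minus_one_aux:
  "l \<in> carrier R \<Longrightarrow> g \<in> carrier R \<Longrightarrow> l \<otimes> (g \<ominus> \<one>) = l \<otimes> g \<ominus> l"
  by (simp add: a_minus_def r_distr r_minus)

lemma (in field) sep:
  fixes p q m :: nat
  assumes p: "normalization_semidom_class.prime p" and ch: "[p] \<cdot> \<one> = \<zero>" and q: "q = p ^ m" "m > 0"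
    and a: "a \<in> carrier R"
  defines "P \<equiv> X [^]\<^bsub>poly_ring R\<^esub> q \<ominus>\<^bsub>poly_ring R\<^esub> X"
  shows "alg_mult P a \<le> 1"
proof (rule ccontr)
  let ?UP = "poly_ring R"
  interpret UP: domain ?UP by (rule univ_poly_is_domain[OF carrier_is_subring])
  interpret ev: ring_hom_ring ?UP R "\<lambda>p. eval p a" by (rule eval_ring_hom[OF carrier_is_subring a])
  have Xc: "X \<in> carrier ?UP" by (rule var_closed(1)[OF carrier_is_subring])
  have Pc: "P \<in> carrier ?UP" unfolding P_def using Xc by simp
  define ca where "ca = poly_of_const a"
  have cac: "ca \<in> carrier ?UP"
    using a by (auto simp: ca_def poly_of_const_def univ_poly_carrier[symmetric] polynomial_def)
  have evX: "eval X a = a" using eval_var[OF a] .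
  have evca: "eval ca a = a" using a by (auto simp: ca_def poly_of_const_def)
  assume "\<not> alg_mult P a \<le> 1"
  then have two: "2 \<le> alg_mult P a" by simp
  then have "alg_mult P a > 0" by simp
  then have "is_root P a" using alg_mult_gt_zero_iff_is_root[OF Pc] by simp
  then have "eval P a = \<zero>" by (simp add: is_root_def)
  moreover have "eval P a = a [^] q \<ominus> a"
    unfolding P_def using Xc evX by (simp add: a_minus_def ev.hom_nat_pow)
  ultimately have aq: "a [^] q = a" using a by (metis minus_closed nat_pow_closed r_right_minus_eq)
  have "R\<lparr>carrier := carrier R\<rparr> = R" by simp
  then interpret pc: ring_hom_ring R ?UP poly_of_const
    using canonical_embedding_ring_hom[OF carrier_is_subring] by simp
  have caq: "ca [^]\<^bsub>?UP\<^esub> q = ca" using pc.hom_nat_pow[OF a, of q] aq by (simp add: ca_def)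
  define G where "G = geo ?UP X ca q"
  have Gc: "G \<in> carrier ?UP" unfolding G_def using UP.geo_closed Xc cac .
  define h where "h = G \<ominus>\<^bsub>?UP\<^esub> \<one>\<^bsub>?UP\<^esub>"
  define lin where "lin = X \<ominus>\<^bsub>?UP\<^esub> ca"
  have lin: "lin = [\<one>, \<ominus> a]" unfolding lin_def ca_def by (rule lin_eq[OF a])
  have linc: "lin \<in> carrier ?UP" unfolding lin_def using Xc cac by simp
  have tel: "lin \<otimes>\<^bsub>?UP\<^esub> G = X [^]\<^bsub>?UP\<^esub> q \<ominus>\<^bsub>?UP\<^esub> ca"
    unfolding lin_def G_def using UP.geo_telescope[OF Xc cac] caq by simp
  have Xq: "X [^]\<^bsub>?UP\<^esub> q \<in> carrier ?UP" using Xc by simp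
  have Ph: "P = lin \<otimes>\<^bsub>?UP\<^esub> h"
  proof -
    have "lin \<otimes>\<^bsub>?UP\<^esub> h = lin \<otimes>\<^bsub>?UP\<^esub> G \<ominus>\<^bsub>?UP\<^esub> lin"
      unfolding h_def using UP.mult_minus_one_aux[OF linc Gc] .
    also have "\<dots> = (X [^]\<^bsub>?UP\<^esub> q \<ominus>\<^bsub>?UP\<^esub> ca) \<ominus>\<^bsub>?UP\<^esub> lin" by (simp only: tel)
    also have "\<dots> = P"
      unfolding lin_def P_def using UP.minus_cancel_aux[OF Xq Xc cac] .
    finally show ?thesis by simp
  qed
  have "lin [^]\<^bsub>?UP\<^esub> (2::nat) pdivides P"
    using le_alg_mult_imp_pdivides[OF a Pc two] lin by simp
  then obtain r where rc: "r \<in> carrier ?UP" and Pr: "P = lin [^]\<^bsub>?UP\<^esub> (2::nat) \<otimes>\<^bsub>?UP\<^esub> r"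
    unfolding pdivides_def factor_def by auto
  have hc: "h \<in> carrier ?UP" unfolding h_def using Gc by simp
  have "lin \<otimes>\<^bsub>?UP\<^esub> h = lin \<otimes>\<^bsub>?UP\<^esub> (lin \<otimes>\<^bsub>?UP\<^esub> r)"
    using Ph Pr linc rc by (simp add: numeral_2_eq_2 UP.m_assoc)
  moreover have "lin \<noteq> \<zero>\<^bsub>?UP\<^esub>" using lin by (simp add: univ_poly_zero)
  ultimately have hr: "h = lin \<otimes>\<^bsub>?UP\<^esub> r"
    using UP.m_lcancel[of lin h "lin \<otimes>\<^bsub>?UP\<^esub> r"] linc hc rc by simp
  have "eval lin a = eval X a \<oplus> \<ominus> eval ca a"
    unfolding lin_def a_minus_def
    using ev.hom_add[OF Xc UP.a_inv_closed[OF cac]] ev.hom_a_inv[OF cac] by simp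
  then have evlin: "eval lin a = \<zero>" using evX evca a by (simp add: r_neg)
  have "eval h a = eval lin a \<otimes> eval r a" unfolding hr by (rule ev.hom_mult[OF linc rc])
  then have "eval h a = \<zero>" using evlin ev.hom_closed[OF rc] by simp
  moreover have "eval h a = \<ominus> \<one>"
  proof -
    have "eval G a = geo R a a q" unfolding G_def using ev.hom_geo[OF Xc cac] evX evca by simp
    also have "\<dots> = [q] \<cdot> (a [^] (q - 1))"
    proof -
      obtain k where k: "q = Suc k" using q p prime_gt_0_nat by (metis gr0_implies_Suc zero_less_power)
      then show ?thesis using geo_same[OF a, of k] by simp
    qed
    also have "\<dots> = \<zero>"
    proof -
      obtain j where j: "m = Suc j" using q gr0_implies_Suc by blast
      have "[q] \<cdot> (a [^] (q - 1)) = [(p * p ^ j)] \<cdot> (a [^] (q - 1))" using q j by simp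
      then show ?thesis using char_zero_mult[OF ch, of "a [^] (q - 1)" "p ^ j"] a by simp
    qed
    finally have "eval G a = \<zero>" .
    moreover have "eval h a = eval G a \<oplus> \<ominus> eval \<one>\<^bsub>?UP\<^esub> a"
      unfolding h_def a_minus_def
      using ev.hom_add[OF Gc UP.a_inv_closed[OF UP.one_closed]] ev.hom_a_inv[OF UP.one_closed] by simp
    ultimately show ?thesis using ev.hom_one by simp
  qed
  ultimately show False using one_not_zero by (metis a_inv_closed add.inv_eq_1_iff one_closed)
qed


lemma size_mset_le1:
  assumes "\<And>x. count M x \<le> 1"
  shows "size M = card (set_mset M)"
proof -
  have "M = mset_set (set_mset M)"
  proof (rule multiset_eqI)
    fix x show "count M x = count (mset_set (set_mset M)) x"
    proof (cases "x \<in># M")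
      case True
      then have "count M x = 1" using assms[of x] count_greater_zero_iff[of M x] by linarith
      then show ?thesis using True by (simp add: count_mset_set)
    next
      case False
      then show ?thesis by (simp add: not_in_iff count_mset_set)
    qed
  qed
  then show ?thesis by (metis size_mset_set)
qed

lemma (in field) Fq_closed:
  fixes p q m :: nat
  assumes p: "normalization_semidom_class.prime p" and ch: "[p] \<cdot> \<one> = \<zero>" and q: "q = p ^ m"
    and x: "x \<in> carrier R" "x [^] q = x" and y: "y \<in> carrier R" "y [^] q = y"
  shows "(x \<oplus> y) [^] q = x \<oplus> y" "(x \<otimes> y) [^] q = x \<otimes> y" "(\<ominus> x) [^] q = \<ominus> x"
    "(x \<ominus> y) [^] q = x \<ominus> y"
proof -
  show 1: "(x \<oplus> y) [^] q = x \<oplus> y" using frobenius_pow[OF p ch x(1) y(1), of m] x y q by simp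
  show "(x \<otimes> y) [^] q = x \<otimes> y" using nat_pow_distrib[OF x(1) y(1), of q] x y by simp
  have "x [^] q \<oplus> (\<ominus> x) [^] q = (x \<oplus> \<ominus> x) [^] q"
    using frobenius_pow[OF p ch x(1) a_inv_closed[OF x(1)], of m] q by simp
  also have "\<dots> = \<zero>"
  proof -
    have "q > 0" using q p prime_gt_0_nat by simp
    then show ?thesis using x(1) by (simp add: r_neg nat_pow_zero)
  qed
  finally have "x \<oplus> (\<ominus> x) [^] q = \<zero>" using x by simp
  then show 3: "(\<ominus> x) [^] q = \<ominus> x"
    using x(1) by (metis a_inv_closed add.inv_closed minus_equality nat_pow_closed a_comm)
  have "(\<ominus> y) [^] q = \<ominus> y"
  proof -
    have "y [^] q \<oplus> (\<ominus> y) [^] q = (y \<oplus> \<ominus> y) [^] q"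
      using frobenius_pow[OF p ch y(1) a_inv_closed[OF y(1)], of m] q by simp
    also have "\<dots> = \<zero>"
    proof -
      have "q > 0" using q p prime_gt_0_nat by simp
      then show ?thesis using y(1) by (simp add: r_neg nat_pow_zero)
    qed
    finally have "y \<oplus> (\<ominus> y) [^] q = \<zero>" using y by simp
    then show ?thesis
      using y(1) by (metis a_inv_closed add.inv_closed minus_equality nat_pow_closed a_comm)
  qed
  then show "(x \<ominus> y) [^] q = x \<ominus> y"
    unfolding a_minus_def using frobenius_pow[OF p ch x(1) a_inv_closed[OF y(1)], of m] x q by simp
qed

context algebraic_closure
begin

lemma card_Fq:
  fixes p q m :: nat
  assumes p: "normalization_semidom_class.prime p" and ch: "[p] \<cdot> \<one> = \<zero>" and q: "q = p ^ m" "m > 0"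
  shows "card {x \<in> carrier L. x [^] q = x} = q"
proof -
  let ?UP = "poly_ring L"
  let ?UK = "K[X]"
  have Ksub: "subring K L" using subfieldE(1)[OF subfield_axioms] .
  interpret UP: domain ?UP by (rule univ_poly_is_domain[OF carrier_is_subring])
  interpret UK: ring ?UK by (rule univ_poly_is_ring[OF Ksub])
  have XK: "X \<in> carrier ?UK" by (rule var_closed(1)[OF Ksub])
  have XL: "X \<in> carrier ?UP" by (rule var_closed(1)[OF carrier_is_subring])
  define P where "P = X [^]\<^bsub>?UP\<^esub> q \<ominus>\<^bsub>?UP\<^esub> X"
  have pow_same: "X [^]\<^bsub>?UK\<^esub> (n::nat) = X [^]\<^bsub>?UP\<^esub> n" for n
    by (induction n) (simp_all add: univ_poly_mult univ_poly_one)
  have XqK: "X [^]\<^bsub>?UK\<^esub> q \<in> carrier ?UK" using XK by simp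
  have PK: "P = X [^]\<^bsub>?UK\<^esub> q \<ominus>\<^bsub>?UK\<^esub> X"
    unfolding P_def a_minus_def pow_same
      univ_poly_a_inv_def'[OF Ksub XK] univ_poly_a_inv_def'[OF carrier_is_subring XL]
    by (simp add: univ_poly_add)
  have PinK: "P \<in> carrier ?UK" unfolding PK using XqK XK by simp
  have Pc: "P \<in> carrier ?UP" using carrier_polynomial_shell[OF Ksub PinK] .
  have spl: "splitted P" using roots_over_subfield[OF PinK] .
  have q2: "q \<ge> 2"
  proof -
    have "p \<ge> 2" using p prime_ge_2_nat by blast
    moreover have "p \<le> p ^ m"
    proof -
      obtain j where j: "m = Suc j" using q(2) gr0_implies_Suc by blast
      have "p ^ j > 0" using p prime_gt_0_nat by simp
      then show ?thesis using j by simp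
    qed
    ultimately show ?thesis using q by simp
  qed
  have degP: "degree P = q"
  proof -
    have m1: "X [^]\<^bsub>?UP\<^esub> q = monom \<one> q"
      using unitary_monom_eq_var_pow[OF carrier_is_subring] by simp
    have mX: "\<ominus>\<^bsub>?UP\<^esub> X \<in> carrier ?UP" using XL by simp
    have pm: "polynomial (carrier L) (monom \<one> q)"
      using m1 XL UP.nat_pow_closed[OF XL, of q] by (simp add: univ_poly_carrier)
    have pX: "polynomial (carrier L) (\<ominus>\<^bsub>?UP\<^esub> X)" using mX by (simp add: univ_poly_carrier)
    have dX: "degree (\<ominus>\<^bsub>?UP\<^esub> X) = 1"
      using univ_poly_a_inv_degree[OF carrier_is_subring XL] by (simp add: var_def)
    have dm: "degree (monom \<one> q) = q" by (simp add: monom_def)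
    have "P = poly_add (monom \<one> q) (\<ominus>\<^bsub>?UP\<^esub> X)"
      unfolding P_def a_minus_def m1 by (simp add: univ_poly_add)
    then show ?thesis using poly_add_degree_eq[OF carrier_is_subring pm pX] dX dm q2 by simp
  qed
  have cnt: "count (roots P) x \<le> 1" for x
  proof (cases "x \<in> carrier L")
    case True
    then show ?thesis
      using sep[OF p ch q True] alg_mult_eq_count_roots[OF Pc] unfolding P_def by metis
  next
    case False
    then have a0: "alg_mult P x = 0" by (simp add: alg_mult_def)
    have "count (roots P) x = alg_mult P x" using alg_mult_eq_count_roots[OF Pc] by simp
    then show ?thesis using a0 by simp
  qed
  have "size (roots P) = q" using spl degP by (simp add: splitted_def)
  then have cardr: "card (set_mset (roots P)) = q" using size_mset_le1[OF cnt] by simp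
  have Pne: "P \<noteq> []" using degP q2 by auto
  have "set_mset (roots P) = {x \<in> carrier L. x [^] q = x}"
  proof (rule equalityI; rule subsetI)
    fix x assume "x \<in># roots P"
    then have "is_root P x" using roots_mem_iff_is_root[OF Pc] by simp
    then have xc: "x \<in> carrier L" and "eval P x = \<zero>" by (auto simp: is_root_def)
    interpret ev: ring_hom_ring ?UP L "\<lambda>p. eval p x" by (rule eval_ring_hom[OF carrier_is_subring xc])
    have "eval P x = x [^] q \<ominus> x"
      unfolding P_def using XL eval_var[OF xc] by (simp add: a_minus_def ev.hom_nat_pow)
    then show "x \<in> {x \<in> carrier L. x [^] q = x}" using xc \<open>eval P x = \<zero>\<close>
      by (metis (mono_tags, lifting) mem_Collect_eq minus_closed nat_pow_closed r_right_minus_eq)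
  next
    fix x assume "x \<in> {x \<in> carrier L. x [^] q = x}"
    then have xc: "x \<in> carrier L" and xq: "x [^] q = x" by auto
    interpret ev: ring_hom_ring ?UP L "\<lambda>p. eval p x" by (rule eval_ring_hom[OF carrier_is_subring xc])
    have "eval P x = x [^] q \<ominus> x"
      unfolding P_def using XL eval_var[OF xc] by (simp add: a_minus_def ev.hom_nat_pow)
    then have "eval P x = \<zero>" using xq xc by (simp add: a_minus_def r_neg)
    then have "is_root P x" using xc Pne by (simp add: is_root_def)
    then show "x \<in># roots P" using roots_mem_iff_is_root[OF Pc] by simp
  qed
  then show ?thesis using cardr by simp
qed

end


lemma (in residues) add_pow_one_res: "[(k::nat)] \<cdot> \<one> = int k mod m"
proof (induction k)
  case 0 then show ?case by (simp add: res_zero_eq)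
next
  case (Suc k)
  have "[Suc k] \<cdot> \<one> = [k] \<cdot> \<one> \<oplus> \<one>" by (simp add: add.nat_pow_Suc)
  also have "\<dots> = (int k mod m + 1) mod m" using Suc by (simp add: res_add_eq res_one_eq)
  also have "\<dots> = int (Suc k) mod m" by (metis mod_add_left_eq of_nat_Suc add.commute)
  finally show ?case .
qed

lemma (in ring_hom_ring) hom_add_pow_nat:
  assumes "x \<in> carrier R" shows "h ([(k::nat)] \<cdot>\<^bsub>R\<^esub> x) = [k] \<cdot>\<^bsub>S\<^esub> h x"
  using assms by (induction k) (auto simp: R.add.nat_pow_Suc S.add.nat_pow_Suc)

lemma GF_exists:
  fixes p m q :: nat
  assumes p: "normalization_semidom_class.prime p" and m: "m > 0" and q: "q = p ^ m"
  shows "\<exists>(L :: ((int list \<times> nat) multiset \<Rightarrow> int) ring) F. field L \<and> F \<subseteq> carrier L \<and> finite F \<and>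
           card F = q \<and> \<zero>\<^bsub>L\<^esub> \<in> F \<and>
           (\<forall>x\<in>F. \<forall>y\<in>F. x \<oplus>\<^bsub>L\<^esub> y \<in> F \<and> x \<otimes>\<^bsub>L\<^esub> y \<in> F \<and> x \<ominus>\<^bsub>L\<^esub> y \<in> F)"
proof -
  define R where "R = residue_ring (int p)"
  interpret R: residues_prime p R by (unfold_locales) (auto simp: p R_def)
  obtain L :: "((int list \<times> nat) multiset \<Rightarrow> int) ring"
    where ac: "algebraic_closure L (R.indexed_const ` carrier R)"
      and hom: "R.indexed_const \<in> ring_hom R L"
    using R.exists_closure by blast
  interpret L: algebraic_closure L "R.indexed_const ` carrier R" using ac .
  interpret h: ring_hom_ring R L R.indexed_const
    by (rule ring_hom_ringI2[OF R.is_ring L.is_ring hom])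
  have "[p] \<cdot>\<^bsub>R\<^esub> \<one>\<^bsub>R\<^esub> = \<zero>\<^bsub>R\<^esub>" using R.add_pow_one_res[of p] by (simp add: R.res_zero_eq)
  then have ch: "[p] \<cdot>\<^bsub>L\<^esub> \<one>\<^bsub>L\<^esub> = \<zero>\<^bsub>L\<^esub>"
    using h.hom_add_pow_nat[OF R.one_closed, of p] by simp
  define F where "F = {x \<in> carrier L. x [^]\<^bsub>L\<^esub> q = x}"
  have cF: "card F = q" unfolding F_def using L.card_Fq[OF p ch q m] .
  have finF: "finite F" using cF q p prime_gt_0_nat card.infinite by (metis not_gr0 power_not_zero)
  have z: "\<zero>\<^bsub>L\<^esub> \<in> F" unfolding F_def using q p prime_gt_0_nat by (simp add: L.nat_pow_zero)
  have cl: "\<forall>x\<in>F. \<forall>y\<in>F. x \<oplus>\<^bsub>L\<^esub> y \<in> F \<and> x \<otimes>\<^bsub>L\<^esub> y \<in> F \<and> x \<ominus>\<^bsub>L\<^esub> y \<in> F"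
    unfolding F_def using L.Fq_closed[OF p ch q] by auto
  show ?thesis
    by (rule exI[of _ L], rule exI[of _ F]) (use L.field_axioms cF finF z cl in \<open>auto simp: F_def\<close>)
qed


lemma sum_div_mod:
  assumes q: "(q::nat) > 0"
  shows "(\<Sum>t<n*q. g (t div q) (t mod q)) = (\<Sum>s<n. \<Sum>u<q. g s u)"
proof (induction n)
  case 0 then show ?case by simp
next
  case (Suc n)
  let ?G = "\<lambda>t. g (t div q) (t mod q)"
  have "(\<Sum>t<Suc n * q. ?G t) = (\<Sum>t\<in>{0..<n*q}. ?G t) + (\<Sum>t\<in>{n*q..<n*q+q}. ?G t)"
    by (simp add: atLeast0LessThan[symmetric] sum.atLeastLessThan_concat add.commute)
  also have "(\<Sum>t\<in>{n*q..<n*q+q}. ?G t) = (\<Sum>u\<in>{0..<q}. ?G (u + n*q))"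
    using sum.shift_bounds_nat_ivl[of ?G 0 "n*q" q] by (simp add: add.commute)
  also have "\<dots> = (\<Sum>u<q. g n u)"
    using q by (intro sum.cong) (auto simp: atLeast0LessThan)
  finally show ?case using Suc by (simp add: atLeast0LessThan)
qed

lemma weighing_rows:
  assumes W: "weighing_matrix n k W" and r: "r < n" "r' < n"
  shows "(\<Sum>s<n. W $$ (r, s) * W $$ (r', s)) = (if r = r' then int k else 0)"
proof -
  have Wc: "W \<in> carrier_mat n n" and e: "W * W\<^sup>T = of_nat k \<cdot>\<^sub>m 1\<^sub>m n"
    using W by (auto simp: weighing_matrix_def)
  have "(W * W\<^sup>T) $$ (r, r') = (\<Sum>s<n. W $$ (r, s) * W $$ (r', s))"
    using Wc r by (simp add: index_mult_mat scalar_prod_def atLeast0LessThan)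
  then show ?thesis using e r by (cases "r = r'") auto
qed

lemma weighing_cols:
  assumes W: "weighing_matrix n k W" and k0: "k > 0" and c: "c < n" "c' < n"
  shows "(\<Sum>s<n. W $$ (s, c) * W $$ (s, c')) = (if c = c' then int k else 0)"
proof -
  have Wc: "W \<in> carrier_mat n n" and e: "W * W\<^sup>T = of_nat k \<cdot>\<^sub>m 1\<^sub>m n"
    using W by (auto simp: weighing_matrix_def)
  define A where "A = map_mat rat_of_int W"
  have Ac: "A \<in> carrier_mat n n" using Wc by (simp add: A_def)
  have AA: "A * A\<^sup>T = of_nat k \<cdot>\<^sub>m 1\<^sub>m n"
  proof (rule eq_matI)
    fix i j assume ij: "i < dim_row (of_nat k \<cdot>\<^sub>m 1\<^sub>m n :: rat mat)" "j < dim_col (of_nat k \<cdot>\<^sub>m 1\<^sub>m n :: rat mat)"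
    then have ij': "i < n" "j < n" by auto
    have "(A * A\<^sup>T) $$ (i, j) = (\<Sum>s<n. rat_of_int (W $$ (i, s) * W $$ (j, s)))"
      using Wc ij' by (simp add: A_def index_mult_mat scalar_prod_def atLeast0LessThan)
    also have "\<dots> = rat_of_int (\<Sum>s<n. W $$ (i, s) * W $$ (j, s))" by simp
    also have "\<dots> = (of_nat k \<cdot>\<^sub>m 1\<^sub>m n :: rat mat) $$ (i, j)"
      using weighing_rows[OF W ij'] ij' by simp
    finally show "(A * A\<^sup>T) $$ (i, j) = (of_nat k \<cdot>\<^sub>m 1\<^sub>m n :: rat mat) $$ (i, j)" .
  qed (use Ac in auto)
  define B where "B = (1 / of_nat k) \<cdot>\<^sub>m A\<^sup>T"
  have Bc: "B \<in> carrier_mat n n" using Ac by (simp add: B_def)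
  have "A * B = (1 / of_nat k) \<cdot>\<^sub>m (A * A\<^sup>T)"
    using Ac by (simp add: B_def mult_smult_distrib[of A n n "A\<^sup>T" n])
  also have "\<dots> = 1\<^sub>m n" unfolding AA using k0 by (intro eq_matI) simp_all
  finally have "A * B = 1\<^sub>m n" .
  then have "B * A = 1\<^sub>m n" using mat_mult_left_right_inverse[OF Ac Bc] by simp
  then have BA: "(1 / of_nat k) \<cdot>\<^sub>m (A\<^sup>T * A) = 1\<^sub>m n"
    using Ac by (simp add: B_def mult_smult_assoc_mat[of "A\<^sup>T" n n A n])
  have "((1 / of_nat k) \<cdot>\<^sub>m (A\<^sup>T * A)) $$ (c, c') = (1\<^sub>m n :: rat mat) $$ (c, c')" using BA by simp
  then have "(1 / of_nat k) * (\<Sum>s<n. rat_of_int (W $$ (s, c) * W $$ (s, c'))) = (if c = c' then 1 else 0)"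
    using Ac c by (simp add: A_def index_mult_mat scalar_prod_def atLeast0LessThan)
  then have "rat_of_int (\<Sum>s<n. W $$ (s, c) * W $$ (s, c')) = (if c = c' then of_nat k else 0)"
    using k0 by (auto simp: field_simps split: if_splits)
  then have "rat_of_int (\<Sum>s<n. W $$ (s, c) * W $$ (s, c')) = rat_of_int (if c = c' then int k else 0)"
    by simp
  then show ?thesis by (simp only: of_int_eq_iff)
qed


lemma (in abelian_group) my_lcancel:
  assumes "x \<in> carrier G" "y \<in> carrier G" "z \<in> carrier G" "x \<oplus> y = x \<oplus> z"
  shows "y = z"
proof -
  have "y = (\<ominus> x \<oplus> x) \<oplus> y" using assms by (simp add: l_neg)
  also have "\<dots> = \<ominus> x \<oplus> (x \<oplus> y)" using assms by (simp add: a_assoc)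
  also have "\<dots> = \<ominus> x \<oplus> (x \<oplus> z)" using assms by simp
  also have "\<dots> = (\<ominus> x \<oplus> x) \<oplus> z" using assms by (simp add: a_assoc)
  also have "\<dots> = z" using assms by (simp add: l_neg)
  finally show ?thesis .
qed

lemma sum4_swap:
  "(\<Sum>s\<in>S. \<Sum>u\<in>U. \<Sum>k\<in>K. \<Sum>l\<in>L. f s u k l) = (\<Sum>k\<in>K. \<Sum>l\<in>L. \<Sum>s\<in>S. \<Sum>u\<in>U. f s u k l)"
proof -
  have "(\<Sum>s\<in>S. \<Sum>u\<in>U. \<Sum>k\<in>K. \<Sum>l\<in>L. f s u k l) = (\<Sum>s\<in>S. \<Sum>k\<in>K. \<Sum>u\<in>U. \<Sum>l\<in>L. f s u k l)"
    by (rule sum.cong[OF refl], rule sum.swap)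
  also have "\<dots> = (\<Sum>s\<in>S. \<Sum>k\<in>K. \<Sum>l\<in>L. \<Sum>u\<in>U. f s u k l)"
    by (rule sum.cong[OF refl], rule sum.cong[OF refl], rule sum.swap)
  also have "\<dots> = (\<Sum>k\<in>K. \<Sum>s\<in>S. \<Sum>l\<in>L. \<Sum>u\<in>U. f s u k l)"
    by (rule sum.swap)
  also have "\<dots> = (\<Sum>k\<in>K. \<Sum>l\<in>L. \<Sum>s\<in>S. \<Sum>u\<in>U. f s u k l)"
    by (rule sum.cong[OF refl], rule sum.swap)
  finally show ?thesis .
qed

lemma sum_delta_inj:
  fixes q :: nat and e :: "nat \<Rightarrow> 'b"
  assumes inj: "inj_on e {..<q}" and al: "\<alpha> \<in> e ` {..<q}"
  shows "(\<Sum>u<q. of_bool (e u = \<alpha>) * of_bool (e u = \<beta>) :: int) = of_bool (\<alpha> = \<beta>)"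
proof -
  obtain u0 where u0: "u0 < q" "e u0 = \<alpha>" using al by auto
  have "(\<Sum>u<q. of_bool (e u = \<alpha>) * of_bool (e u = \<beta>) :: int) = (\<Sum>u<q. if u = u0 then of_bool (\<alpha> = \<beta>) else 0)"
  proof (rule sum.cong[OF refl])
    fix u assume u: "u \<in> {..<q}"
    show "(of_bool (e u = \<alpha>) * of_bool (e u = \<beta>) :: int) = (if u = u0 then of_bool (\<alpha> = \<beta>) else 0)"
    proof (cases "u = u0")
      case True then show ?thesis using u0 by simp
    next
      case False
      then have "e u \<noteq> \<alpha>" using inj u u0 by (metis inj_on_def lessThan_iff)
      then show ?thesis using False by simp
    qed
  qed
  also have "\<dots> = of_bool (\<alpha> = \<beta>)" using u0 sum.delta[OF finite_lessThan[of q], of u0 "\<lambda>_. (of_bool (\<alpha> = \<beta>) :: int)"] by simp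
  finally show ?thesis .
qed

lemma int_pm1_mult: "(a::int) \<in> {1, -1, 0} \<Longrightarrow> b \<in> {1, -1, 0} \<Longrightarrow> a * b \<in> {1, -1, 0}"
  by auto


lemma (in cring) shift_eq:
  assumes "x \<in> carrier R" "y \<in> carrier R" "a \<in> carrier R" "b \<in> carrier R" "c \<in> carrier R"
  shows "(x \<oplus> a \<otimes> c = y \<oplus> b \<otimes> c) = (y = x \<oplus> (a \<ominus> b) \<otimes> c)"
proof
  assume eq: "x \<oplus> a \<otimes> c = y \<oplus> b \<otimes> c"
  have "y = (y \<oplus> b \<otimes> c) \<ominus> b \<otimes> c" using assms by algebra
  also have "\<dots> = (x \<oplus> a \<otimes> c) \<ominus> b \<otimes> c" using eq by simp
  also have "\<dots> = x \<oplus> (a \<ominus> b) \<otimes> c" using assms by algebra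
  finally show "y = x \<oplus> (a \<ominus> b) \<otimes> c" .
next
  assume eq: "y = x \<oplus> (a \<ominus> b) \<otimes> c"
  show "x \<oplus> a \<otimes> c = y \<oplus> b \<otimes> c" unfolding eq using assms by algebra
qed

lemma sum_factor:
  "(\<Sum>s\<in>S. \<Sum>u\<in>U. (c::int) * (f s * g u)) = c * ((\<Sum>s\<in>S. f s) * (\<Sum>u\<in>U. g u))"
proof -
  have "c * ((\<Sum>s\<in>S. f s) * (\<Sum>u\<in>U. g u)) = c * (\<Sum>s\<in>S. \<Sum>u\<in>U. f s * g u)"
    by (simp only: sum_product)
  also have "\<dots> = (\<Sum>s\<in>S. \<Sum>u\<in>U. c * (f s * g u))" by (simp add: sum_distrib_left)
  finally show ?thesis by simp
qed

lemma construction: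
  fixes L :: "('a, 'b) ring_scheme" (structure) and F :: "'a set" and W :: "int mat" and n q :: nat
  assumes fL: "field L" and FL: "F \<subseteq> carrier L" and finF: "finite F" and cF: "card F = q"
    and z: "\<zero>\<^bsub>L\<^esub> \<in> F"
    and cl: "\<forall>x\<in>F. \<forall>y\<in>F. x \<oplus>\<^bsub>L\<^esub> y \<in> F \<and> x \<otimes>\<^bsub>L\<^esub> y \<in> F \<and> x \<ominus>\<^bsub>L\<^esub> y \<in> F"
    and W: "weighing_matrix n (n - 1) W" and n2: "n \<ge> 2" and nq: "n \<le> q"
  shows "\<exists>S. finite S \<and> card S = q - 1 \<and> mutually_unbiased_weighing (n * q) ((n - 1)^2) S"
proof -
  interpret L: field L by (rule fL)
  have q0: "q > 0" using n2 nq by simp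
  obtain e where e: "bij_betw e {..<q} F"
    using ex_bij_betw_nat_finite[OF finF] cF by (auto simp: atLeast0LessThan)
  have einj: "inj_on e {..<q}" using bij_betw_imp_inj_on[OF e] .
  have eimg: "e ` {..<q} = F" using bij_betw_imp_surj_on[OF e] .
  have eF: "e u \<in> F" if "u < q" for u using eimg that by auto
  have eL: "e u \<in> carrier L" if "u < q" for u using eF[OF that] FL by auto
  have FLx: "x \<in> carrier L" if "x \<in> F" for x using that FL by auto
  have Wc: "W \<in> carrier_mat n n" and Went: "\<And>i j. i < n \<Longrightarrow> j < n \<Longrightarrow> W $$ (i, j) \<in> {1, -1, 0}"
    using W by (auto simp: weighing_matrix_def)
  have rows: "\<And>r r'. r < n \<Longrightarrow> r' < n \<Longrightarrow>
      (\<Sum>s<n. W $$ (r, s) * W $$ (r', s)) = (if r = r' then int (n - 1) else 0)"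
    using weighing_rows[OF W] by simp
  have cols: "\<And>c c'. c < n \<Longrightarrow> c' < n \<Longrightarrow>
      (\<Sum>s<n. W $$ (s, c) * W $$ (s, c')) = (if c = c' then int (n - 1) else 0)"
    using weighing_cols[OF W] n2 by simp
  have dv: "i div q < n" if "i < n * q" for i using that by (simp add: less_mult_imp_div_less)
  have md: "i mod q < q" for i using q0 by simp
  define Nf where "Nf a i j = (\<Sum>k<n. W $$ (i div q, k) * W $$ (j div q, k) *
      of_bool (e (j mod q) = e (i mod q) \<oplus>\<^bsub>L\<^esub> a \<otimes>\<^bsub>L\<^esub> e k))" for a i j
  define N where "N a = mat (n * q) (n * q) (\<lambda>(i, j). Nf a i j)" for a
  have Nidx: "N a $$ (i, j) = Nf a i j" if "i < n * q" "j < n * q" for a i j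
    using that by (simp add: N_def)
  have Nc: "N a \<in> carrier_mat (n * q) (n * q)" for a by (simp add: N_def)
  have Nd: "dim_row (N a) = n * q" "dim_col (N a) = n * q" for a by (simp_all add: N_def)

  have L1: "N a * (N b)\<^sup>T = of_nat (n - 1) \<cdot>\<^sub>m N (a \<ominus>\<^bsub>L\<^esub> b)" if aF: "a \<in> F" and bF: "b \<in> F" for a b
  proof (rule eq_matI)
    fix i j assume "i < dim_row (of_nat (n - 1) \<cdot>\<^sub>m N (a \<ominus>\<^bsub>L\<^esub> b) :: int mat)"
      "j < dim_col (of_nat (n - 1) \<cdot>\<^sub>m N (a \<ominus>\<^bsub>L\<^esub> b) :: int mat)"
    then have i: "i < n * q" and j: "j < n * q" by (auto simp: N_def)
    define r where "r = i div q"
    define r' where "r' = j div q"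
    define x where "x = e (i mod q)"
    define y where "y = e (j mod q)"
    have r: "r < n" and r': "r' < n" using dv i j by (auto simp: r_def r'_def)
    have xF: "x \<in> F" and yF: "y \<in> F" using eF md by (auto simp: x_def y_def)
    define Xk where "Xk k = x \<oplus>\<^bsub>L\<^esub> a \<otimes>\<^bsub>L\<^esub> e k" for k
    define Yk where "Yk k = y \<oplus>\<^bsub>L\<^esub> b \<otimes>\<^bsub>L\<^esub> e k" for k
    have XkF: "Xk k \<in> F" if "k < n" for k
      using cl xF aF eF[of k] that nq unfolding Xk_def by auto
    define G where "G s u = (\<Sum>k<n. W $$ (r, k) * W $$ (s, k) * of_bool (e u = Xk k)) *
                            (\<Sum>l<n. W $$ (r', l) * W $$ (s, l) * of_bool (e u = Yk l))" for s u
    have "(N a * (N b)\<^sup>T) $$ (i, j) = (\<Sum>t<n * q. N a $$ (i, t) * N b $$ (j, t))"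
      using i j by (simp add: index_mult_mat scalar_prod_def atLeast0LessThan Nd)
    also have "\<dots> = (\<Sum>t<n * q. G (t div q) (t mod q))"
      by (rule sum.cong[OF refl]) (simp add: Nidx i j G_def Nf_def Xk_def Yk_def r_def r'_def x_def y_def)
    also have "\<dots> = (\<Sum>s<n. \<Sum>u<q. G s u)" by (rule sum_div_mod[OF q0])
    also have "\<dots> = (\<Sum>s<n. \<Sum>u<q. \<Sum>k<n. \<Sum>l<n. (W $$ (r, k) * W $$ (r', l)) *
          ((W $$ (s, k) * W $$ (s, l)) * (of_bool (e u = Xk k) * of_bool (e u = Yk l))))"
      unfolding G_def sum_product by (intro sum.cong refl) (simp add: ac_simps)
    also have "\<dots> = (\<Sum>k<n. \<Sum>l<n. \<Sum>s<n. \<Sum>u<q. (W $$ (r, k) * W $$ (r', l)) *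
          ((W $$ (s, k) * W $$ (s, l)) * (of_bool (e u = Xk k) * of_bool (e u = Yk l))))"
      by (rule sum4_swap)
    also have "\<dots> = (\<Sum>k<n. \<Sum>l<n. (W $$ (r, k) * W $$ (r', l)) *
          ((\<Sum>s<n. W $$ (s, k) * W $$ (s, l)) * (\<Sum>u<q. of_bool (e u = Xk k) * of_bool (e u = Yk l))))"
      by (rule sum.cong[OF refl], rule sum.cong[OF refl], rule sum_factor)
    also have "\<dots> = (\<Sum>k<n. \<Sum>l<n. (W $$ (r, k) * W $$ (r', l)) *
          ((if k = l then int (n - 1) else 0) * of_bool (Xk k = Yk l)))"
    proof (intro sum.cong refl)
      fix k l assume k: "k \<in> {..<n}" and l: "l \<in> {..<n}"
      have "Xk k \<in> e ` {..<q}" using XkF[of k] k eimg by auto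
      then show "(W $$ (r, k) * W $$ (r', l)) *
          ((\<Sum>s<n. W $$ (s, k) * W $$ (s, l)) * (\<Sum>u<q. of_bool (e u = Xk k) * of_bool (e u = Yk l))) =
          (W $$ (r, k) * W $$ (r', l)) * ((if k = l then int (n - 1) else 0) * of_bool (Xk k = Yk l))"
        using cols[of k l] k l sum_delta_inj[OF einj, of "Xk k" "Yk l"] by simp
    qed
    also have "\<dots> = (\<Sum>k<n. W $$ (r, k) * W $$ (r', k) * (int (n - 1) * of_bool (Xk k = Yk k)))"
    proof (rule sum.cong[OF refl])
      fix k assume k: "k \<in> {..<n}"
      have "(\<Sum>l<n. (W $$ (r, k) * W $$ (r', l)) * ((if k = l then int (n - 1) else 0) * of_bool (Xk k = Yk l)))
          = (\<Sum>l<n. if k = l then W $$ (r, k) * W $$ (r', l) * (int (n - 1) * of_bool (Xk k = Yk l)) else 0)"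
        by (intro sum.cong refl) auto
      also have "\<dots> = W $$ (r, k) * W $$ (r', k) * (int (n - 1) * of_bool (Xk k = Yk k))"
        using k by simp
      finally show "(\<Sum>l<n. (W $$ (r, k) * W $$ (r', l)) * ((if k = l then int (n - 1) else 0) * of_bool (Xk k = Yk l)))
          = W $$ (r, k) * W $$ (r', k) * (int (n - 1) * of_bool (Xk k = Yk k))" .
    qed
    also have "\<dots> = int (n - 1) * (\<Sum>k<n. W $$ (r, k) * W $$ (r', k) *
          of_bool (y = x \<oplus>\<^bsub>L\<^esub> (a \<ominus>\<^bsub>L\<^esub> b) \<otimes>\<^bsub>L\<^esub> e k))"
    proof -
      have eqv: "Xk k = Yk k \<longleftrightarrow> y = x \<oplus>\<^bsub>L\<^esub> (a \<ominus>\<^bsub>L\<^esub> b) \<otimes>\<^bsub>L\<^esub> e k" if "k < n" for k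
        unfolding Xk_def Yk_def
        using L.shift_eq[OF FLx[OF xF] FLx[OF yF] FLx[OF aF] FLx[OF bF] eL[of k]] that nq by simp
      show ?thesis unfolding sum_distrib_left by (intro sum.cong refl) (simp add: eqv ac_simps)
    qed
    also have "\<dots> = (of_nat (n - 1) \<cdot>\<^sub>m N (a \<ominus>\<^bsub>L\<^esub> b)) $$ (i, j)"
      using i j by (simp add: Nidx Nf_def r_def r'_def x_def y_def index_smult_mat Nd)
    finally show "(N a * (N b)\<^sup>T) $$ (i, j) = (of_nat (n - 1) \<cdot>\<^sub>m N (a \<ominus>\<^bsub>L\<^esub> b)) $$ (i, j)" .
  qed (simp_all add: Nd)
  have L2: "N \<zero>\<^bsub>L\<^esub> = of_nat (n - 1) \<cdot>\<^sub>m 1\<^sub>m (n * q)"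
  proof (rule eq_matI)
    fix i j assume "i < dim_row (of_nat (n - 1) \<cdot>\<^sub>m 1\<^sub>m (n * q) :: int mat)"
      "j < dim_col (of_nat (n - 1) \<cdot>\<^sub>m 1\<^sub>m (n * q) :: int mat)"
    then have i: "i < n * q" and j: "j < n * q" by auto
    have xL: "e (i mod q) \<in> carrier L" using eL md by auto
    have "N \<zero>\<^bsub>L\<^esub> $$ (i, j) = (\<Sum>k<n. W $$ (i div q, k) * W $$ (j div q, k) *
        of_bool (e (j mod q) = e (i mod q)))"
      using i j xL eL nq by (simp add: Nidx Nf_def)
    also have "\<dots> = of_bool (e (j mod q) = e (i mod q)) * (\<Sum>k<n. W $$ (i div q, k) * W $$ (j div q, k))"
      by (simp add: sum_distrib_left ac_simps)
    also have "\<dots> = of_bool (e (j mod q) = e (i mod q)) * (if i div q = j div q then int (n - 1) else 0)"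
      using rows dv i j by simp
    also have "\<dots> = (of_nat (n - 1) \<cdot>\<^sub>m 1\<^sub>m (n * q) :: int mat) $$ (i, j)"
    proof -
      have "(e (j mod q) = e (i mod q) \<and> i div q = j div q) \<longleftrightarrow> i = j"
      proof
        assume h: "e (j mod q) = e (i mod q) \<and> i div q = j div q"
        then have "j mod q = i mod q" using einj md by (metis inj_on_def lessThan_iff)
        then show "i = j" using h by (metis div_mult_mod_eq)
      qed simp
      then show ?thesis using i j by auto
    qed
    finally show "N \<zero>\<^bsub>L\<^esub> $$ (i, j) = (of_nat (n - 1) \<cdot>\<^sub>m 1\<^sub>m (n * q) :: int mat) $$ (i, j)" .
  qed (simp_all add: Nd)

  have L3: "Nf c i j \<in> {1, -1, 0}" if cF: "c \<in> F" and c0: "c \<noteq> \<zero>\<^bsub>L\<^esub>" and i: "i < n * q" and j: "j < n * q" for c i j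
  proof -
    define x where "x = e (i mod q)"
    define y where "y = e (j mod q)"
    have xL: "x \<in> carrier L" and yL: "y \<in> carrier L" using eL md by (auto simp: x_def y_def)
    have cL: "c \<in> carrier L" using FLx[OF cF] .
    show ?thesis
    proof (cases "\<exists>k0<n. y = x \<oplus>\<^bsub>L\<^esub> c \<otimes>\<^bsub>L\<^esub> e k0")
      case True
      then obtain k0 where k0: "k0 < n" "y = x \<oplus>\<^bsub>L\<^esub> c \<otimes>\<^bsub>L\<^esub> e k0" by blast
      have uniq: "y = x \<oplus>\<^bsub>L\<^esub> c \<otimes>\<^bsub>L\<^esub> e k \<longleftrightarrow> k = k0" if k: "k < n" for k
      proof
        assume "y = x \<oplus>\<^bsub>L\<^esub> c \<otimes>\<^bsub>L\<^esub> e k"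
        then have "x \<oplus>\<^bsub>L\<^esub> c \<otimes>\<^bsub>L\<^esub> e k = x \<oplus>\<^bsub>L\<^esub> c \<otimes>\<^bsub>L\<^esub> e k0" using k0 by simp
        then have "c \<otimes>\<^bsub>L\<^esub> e k = c \<otimes>\<^bsub>L\<^esub> e k0"
          using L.my_lcancel xL cL eL k k0 nq by (meson L.m_closed less_le_trans)
        then have "e k = e k0" using L.m_lcancel[OF c0 cL] eL k k0 nq by (meson less_le_trans)
        then show "k = k0" using einj k k0 nq by (metis inj_on_def lessThan_iff less_le_trans)
      qed (use k0 in simp)
      have "Nf c i j = (\<Sum>k<n. if k = k0 then W $$ (i div q, k) * W $$ (j div q, k) else 0)"
        unfolding Nf_def x_def[symmetric] y_def[symmetric]
        by (intro sum.cong refl) (use uniq in auto)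
      also have "\<dots> = W $$ (i div q, k0) * W $$ (j div q, k0)" using k0 by simp
      finally show ?thesis using int_pm1_mult Went dv i j k0 by metis
    next
      case False
      then have "Nf c i j = (\<Sum>k<n. 0)"
        unfolding Nf_def x_def[symmetric] y_def[symmetric] by (intro sum.cong refl) auto
      then show ?thesis by simp
    qed
  qed

  have Nw: "weighing_matrix (n * q) ((n - 1)^2) (N a)" if aF: "a \<in> F" and a0: "a \<noteq> \<zero>\<^bsub>L\<^esub>" for a
  proof -
    have "N a * (N a)\<^sup>T = of_nat (n - 1) \<cdot>\<^sub>m N \<zero>\<^bsub>L\<^esub>"
    proof -
      have "a \<ominus>\<^bsub>L\<^esub> a = \<zero>\<^bsub>L\<^esub>" using L.r_right_minus_eq[OF FLx[OF aF] FLx[OF aF]] by simp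
      then show ?thesis using L1[OF aF aF] by simp
    qed
    also have "\<dots> = of_nat ((n - 1)^2) \<cdot>\<^sub>m 1\<^sub>m (n * q)"
      unfolding L2 by (rule eq_matI) (auto simp: power2_eq_square)
    finally have prod: "N a * (N a)\<^sup>T = of_nat ((n - 1)^2) \<cdot>\<^sub>m 1\<^sub>m (n * q)" .
    show ?thesis unfolding weighing_matrix_def using Nc prod L3[OF aF a0] Nidx by auto
  qed

  have col0: "\<exists>s<n. \<forall>k<n. e k = \<zero>\<^bsub>L\<^esub> \<longrightarrow> W $$ (s, k) = 0"
  proof (cases "\<exists>k0<n. e k0 = \<zero>\<^bsub>L\<^esub>")
    case True
    then obtain k0 where k0: "k0 < n" "e k0 = \<zero>\<^bsub>L\<^esub>" by blast
    have "\<exists>s<n. W $$ (s, k0) = 0"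
    proof (rule ccontr)
      assume "\<not> (\<exists>s<n. W $$ (s, k0) = 0)"
      then have "\<forall>s<n. W $$ (s, k0) * W $$ (s, k0) = 1" using Went k0 by fastforce
      then have "(\<Sum>s<n. W $$ (s, k0) * W $$ (s, k0)) = (\<Sum>s<n. 1)" by (intro sum.cong) auto
      then show False using cols[OF k0(1) k0(1)] n2 by simp
    qed
    then obtain s where s: "s < n" "W $$ (s, k0) = 0" by blast
    have "\<forall>k<n. e k = \<zero>\<^bsub>L\<^esub> \<longrightarrow> W $$ (s, k) = 0"
      using s k0 einj nq by (metis inj_on_def lessThan_iff less_le_trans)
    then show ?thesis using s by blast
  next
    case False
    then have "\<forall>k<n. e k = \<zero>\<^bsub>L\<^esub> \<longrightarrow> W $$ (0, k) = 0" by blast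
    moreover have "(0::nat) < n" using n2 by simp
    ultimately show ?thesis by blast
  qed

  have distinct: "N a \<noteq> N b" if aF: "a \<in> F" and bF: "b \<in> F" and ab: "a \<noteq> b" for a b
  proof
    assume eq: "N a = N b"
    define c where "c = a \<ominus>\<^bsub>L\<^esub> b"
    have cF: "c \<in> F" using cl aF bF by (simp add: c_def)
    have c0: "c \<noteq> \<zero>\<^bsub>L\<^esub>" using ab FLx[OF aF] FLx[OF bF] by (simp add: c_def L.r_right_minus_eq)
    have cL: "c \<in> carrier L" using FLx[OF cF] .
    obtain s where s: "s < n" and sW: "\<forall>k<n. e k = \<zero>\<^bsub>L\<^esub> \<longrightarrow> W $$ (s, k) = 0" using col0 by blast
    define i0 where "i0 = s * q"
    have i0: "i0 < n * q" using s q0 by (simp add: i0_def)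
    have i0d: "i0 div q = s" "i0 mod q = 0" using q0 by (simp_all add: i0_def)
    have "Nf c i0 i0 = 0"
    proof -
      have "Nf c i0 i0 = (\<Sum>k<n. 0)"
        unfolding Nf_def i0d
      proof (intro sum.cong refl)
        fix k assume k: "k \<in> {..<n}"
        have e0: "e 0 \<in> carrier L" using eL q0 by simp
        have ek: "e k \<in> carrier L" using eL k nq by auto
        show "W $$ (s, k) * W $$ (s, k) * of_bool (e 0 = e 0 \<oplus>\<^bsub>L\<^esub> c \<otimes>\<^bsub>L\<^esub> e k) = 0"
        proof (cases "e 0 = e 0 \<oplus>\<^bsub>L\<^esub> c \<otimes>\<^bsub>L\<^esub> e k")
          case True
          then have "e 0 \<oplus>\<^bsub>L\<^esub> \<zero>\<^bsub>L\<^esub> = e 0 \<oplus>\<^bsub>L\<^esub> c \<otimes>\<^bsub>L\<^esub> e k" using e0 by simp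
          then have "\<zero>\<^bsub>L\<^esub> = c \<otimes>\<^bsub>L\<^esub> e k" using L.my_lcancel e0 cL ek by (meson L.m_closed L.zero_closed)
          then have "e k = \<zero>\<^bsub>L\<^esub>" using L.integral[OF _ cL ek] c0 by metis
          then show ?thesis using sW k by simp
        qed simp
      qed
      then show ?thesis by simp
    qed
    moreover have "Nf c i0 i0 = int (n - 1)"
    proof -
      have "N a * (N b)\<^sup>T = N a * (N a)\<^sup>T" using eq by simp
      then have "of_nat (n - 1) \<cdot>\<^sub>m N c = (of_nat (n - 1) \<cdot>\<^sub>m N \<zero>\<^bsub>L\<^esub> :: int mat)"
        using L1[OF aF bF] L1[OF aF aF] L.r_right_minus_eq[OF FLx[OF aF] FLx[OF aF]] by (simp add: c_def)
      then have "(of_nat (n - 1) \<cdot>\<^sub>m N c :: int mat) $$ (i0, i0) = (of_nat (n - 1) \<cdot>\<^sub>m N \<zero>\<^bsub>L\<^esub>) $$ (i0, i0)"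
        by simp
      then have "int (n - 1) * Nf c i0 i0 = int (n - 1) * int (n - 1)"
        using i0 by (simp add: Nidx Nd L2)
      then show ?thesis using n2 by simp
    qed
    ultimately show False using n2 by simp
  qed

  define S where "S = N ` (F - {\<zero>\<^bsub>L\<^esub>})"
  have inj: "inj_on N (F - {\<zero>\<^bsub>L\<^esub>})" using distinct by (auto simp: inj_on_def)
  have cS: "card S = q - 1" unfolding S_def using card_image[OF inj] cF z finF by (simp add: card_Diff_singleton)
  have fS: "finite S" unfolding S_def using finF by simp
  have mu: "mutually_unbiased_weighing (n * q) ((n - 1)^2) S"
    unfolding mutually_unbiased_weighing_def
  proof (intro conjI ballI impI)
    fix M assume "M \<in> S"
    then show "weighing_matrix (n * q) ((n - 1)^2) M" using Nw by (auto simp: S_def)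
  next
    fix M1 M2 assume M1: "M1 \<in> S" and M2: "M2 \<in> S" and ne: "M1 \<noteq> M2"
    obtain a where a: "a \<in> F" "a \<noteq> \<zero>\<^bsub>L\<^esub>" "M1 = N a" using M1 by (auto simp: S_def)
    obtain b where b: "b \<in> F" "b \<noteq> \<zero>\<^bsub>L\<^esub>" "M2 = N b" using M2 by (auto simp: S_def)
    have ab: "a \<noteq> b" using ne a b by auto
    define c where "c = a \<ominus>\<^bsub>L\<^esub> b"
    have cF: "c \<in> F" using cl a b by (simp add: c_def)
    have c0: "c \<noteq> \<zero>\<^bsub>L\<^esub>" using ab FLx[OF a(1)] FLx[OF b(1)] by (simp add: c_def L.r_right_minus_eq)
    show "unbiased (n * q) ((n - 1)^2) M1 M2"
      unfolding unbiased_def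
    proof (intro exI conjI)
      show "weighing_matrix (n * q) ((n - 1)^2) (N c)" using Nw[OF cF c0] .
      have sq: "sqrt (real ((n - 1)^2)) = real (n - 1)" by simp
      have pos: "real (n - 1) > 0" using n2 by simp
      show "(1 / sqrt (real ((n - 1)^2))) \<cdot>\<^sub>m map_mat real_of_int (M1 * M2\<^sup>T) = map_mat real_of_int (N c)"
        unfolding sq a(3) b(3) L1[OF a(1) b(1)] c_def[symmetric]
      proof (rule eq_matI)
        fix i j assume "i < dim_row (map_mat real_of_int (N c))" "j < dim_col (map_mat real_of_int (N c))"
        then have i: "i < n * q" and j: "j < n * q" by (auto simp: Nd)
        show "((1 / real (n - 1)) \<cdot>\<^sub>m map_mat real_of_int (of_nat (n - 1) \<cdot>\<^sub>m N c)) $$ (i, j) =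
            map_mat real_of_int (N c) $$ (i, j)"
          using i j pos by (simp add: Nd)
      qed (simp_all add: Nd)
    qed
  qed
  show ?thesis using fS cS mu by blast
qed


theorem corollary3p4:
  fixes n q :: nat
  assumes "n \<ge> 2"
    and "\<exists>W. weighing_matrix n (n - 1) W"
    and "primepow q"
    and "q \<ge> n"
  shows "\<exists>S. finite S \<and> card S = q - 1 \<and>
             mutually_unbiased_weighing (n * q) ((n - 1)^2) S"
proof -
  obtain W where W: "weighing_matrix n (n - 1) W" using assms(2) by blast
  obtain p m where p: "normalization_semidom_class.prime p" and m: "m > 0" and q: "q = p ^ m"
    using assms(3) unfolding primepow_def by blast
  obtain L :: "((int list \<times> nat) multiset \<Rightarrow> int) ring" and F where
    fL: "field L" and FL: "F \<subseteq> carrier L" and finF: "finite F" and cF: "card F = q"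
    and z: "\<zero>\<^bsub>L\<^esub> \<in> F"
    and cl: "\<forall>x\<in>F. \<forall>y\<in>F. x \<oplus>\<^bsub>L\<^esub> y \<in> F \<and> x \<otimes>\<^bsub>L\<^esub> y \<in> F \<and> x \<ominus>\<^bsub>L\<^esub> y \<in> F"
    using GF_exists[OF p m q] by blast
  show ?thesis using construction[OF fL FL finF cF z cl W assms(1) assms(4)] .
qed

end
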